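(* In the setting of a finite MDP with tabular softmax policies and $\min_s\mu(s)>0$, let $C_\infty:=\max_\pi\|d_\mu^\pi/\mu\|_\infty$ and $\eta=\frac{1-\gamma}{6(1-\gamma)+8(C_\infty-(1-\gamma))}\cdot\frac{1}{\sqrt S}$. Let $\theta$ satisfy $\frac{\partial V^{\pi_\theta}(\mu)}{\partial\theta}\neq0$ and set $\theta'=\theta+\eta\,\frac{\partial V^{\pi_\theta}(\mu)}{\partial\theta}\Big/\Big\|\frac{\partial V^{\pi_\theta}(\mu)}{\partial\theta}\Big\|_2$. Then for every $\zeta\in[0,1]$, with $\theta_\zeta:=\theta+\zeta(\theta'-\theta)$, $$\Big\|\frac{\partial V^{\pi_{\theta_\zeta}}(\mu)}{\partial\theta_\zeta}\Big\|_2\le2\Big\|\frac{\partial V^{\pi_\theta}(\mu)}{\partial\theta}\Big\|_2.$$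
   Context: A finite MDP $(\mathcal{S},\mathcal{A},\mathcal{P},r,\gamma)$ with $S=|\mathcal{S}|$, rewards $r(s,a)\in[0,1]$, $\gamma\in[0,1)$; $V^\pi(s)$ is the expected discounted return from $s$ under $\pi$, $V^\pi(\mu)=\sum_s\mu(s)V^\pi(s)$; $d_\mu^\pi(s)=(1-\gamma)\sum_{t\ge0}\gamma^t\Pr(s_t=s\mid s_0\sim\mu,\pi,\mathcal{P})$. Tabular softmax policy: $\pi_\theta(a|s)=e^{\theta(s,a)}/\sum_{a'}e^{\theta(s,a')}$, $\theta\in\mathbb{R}^{\mathcal{S}\times\mathcal{A}}$. *)

theory Defs
  imports "HOL-Analysis.Analysis"
begin

definition is_policy :: "('s::finite \<Rightarrow> 'a::finite \<Rightarrow> real) \<Rightarrow> bool" where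
  "is_policy pol \<longleftrightarrow> (\<forall>s a. 0 \<le> pol s a) \<and> (\<forall>s. (\<Sum>a\<in>UNIV. pol s a) = 1)"

definition is_MDP :: "('s::finite \<Rightarrow> 'a::finite \<Rightarrow> 's \<Rightarrow> real) \<Rightarrow> ('s \<Rightarrow> 'a \<Rightarrow> real) \<Rightarrow> real \<Rightarrow> bool" where
  "is_MDP P r gamma \<longleftrightarrow>
     (\<forall>s a s'. 0 \<le> P s a s') \<and> (\<forall>s a. (\<Sum>s'\<in>UNIV. P s a s') = 1) \<and>
     (\<forall>s a. 0 \<le> r s a \<and> r s a \<le> 1) \<and> 0 \<le> gamma \<and> gamma < 1"

definition Ppi :: "('s::finite \<Rightarrow> 'a::finite \<Rightarrow> 's \<Rightarrow> real) \<Rightarrow> ('s \<Rightarrow> 'a \<Rightarrow> real) \<Rightarrow> 's \<Rightarrow> 's \<Rightarrow> real" where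
  "Ppi P pol s s' = (\<Sum>a\<in>UNIV. pol s a * P s a s')"

text \<open>sdist P pol nu t s = Pr(s_t = s | s_0 ~ nu, pol, P).\<close>
fun sdist :: "('s::finite \<Rightarrow> 'a::finite \<Rightarrow> 's \<Rightarrow> real) \<Rightarrow> ('s \<Rightarrow> 'a \<Rightarrow> real) \<Rightarrow> ('s \<Rightarrow> real) \<Rightarrow> nat \<Rightarrow> 's \<Rightarrow> real" where
  "sdist P pol nu 0 = nu"
| "sdist P pol nu (Suc t) = (\<lambda>s'. \<Sum>s\<in>UNIV. sdist P pol nu t s * Ppi P pol s s')"

definition Vs :: "('s::finite \<Rightarrow> 'a::finite \<Rightarrow> 's \<Rightarrow> real) \<Rightarrow> ('s \<Rightarrow> 'a \<Rightarrow> real) \<Rightarrow> real \<Rightarrow> ('s \<Rightarrow> 'a \<Rightarrow> real) \<Rightarrow> 's \<Rightarrow> real" where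
  "Vs P r gamma pol s =
     (\<Sum>t. gamma ^ t * (\<Sum>s'\<in>UNIV. sdist P pol (\<lambda>x. if x = s then 1 else 0) t s' * (\<Sum>a\<in>UNIV. pol s' a * r s' a)))"

definition Vmu :: "('s::finite \<Rightarrow> 'a::finite \<Rightarrow> 's \<Rightarrow> real) \<Rightarrow> ('s \<Rightarrow> 'a \<Rightarrow> real) \<Rightarrow> real \<Rightarrow> ('s \<Rightarrow> 'a \<Rightarrow> real) \<Rightarrow> ('s \<Rightarrow> real) \<Rightarrow> real" where
  "Vmu P r gamma pol mu = (\<Sum>s\<in>UNIV. mu s * Vs P r gamma pol s)"

definition dvisit :: "('s::finite \<Rightarrow> 'a::finite \<Rightarrow> 's \<Rightarrow> real) \<Rightarrow> real \<Rightarrow> ('s \<Rightarrow> 'a \<Rightarrow> real) \<Rightarrow> ('s \<Rightarrow> real) \<Rightarrow> 's \<Rightarrow> real" where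
  "dvisit P gamma pol mu s = (1 - gamma) * (\<Sum>t. gamma ^ t * sdist P pol mu t s)"

definition C_inf :: "('s::finite \<Rightarrow> 'a::finite \<Rightarrow> 's \<Rightarrow> real) \<Rightarrow> real \<Rightarrow> ('s \<Rightarrow> real) \<Rightarrow> real" where
  "C_inf P gamma mu = Sup {dvisit P gamma pol mu s / mu s | (pol :: 's \<Rightarrow> 'a \<Rightarrow> real) s. is_policy pol}"

definition softmax :: "real ^ ('s::finite \<times> 'a::finite) \<Rightarrow> 's \<Rightarrow> 'a \<Rightarrow> real" where
  "softmax theta s a = exp (theta $ (s, a)) / (\<Sum>a'\<in>UNIV. exp (theta $ (s, a')))"

definition grad :: "(real ^ 'n::finite \<Rightarrow> real) \<Rightarrow> real ^ 'n \<Rightarrow> real ^ 'n" where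
  "grad f theta = (\<chi> i. deriv (\<lambda>t. f (theta + t *\<^sub>R axis i 1)) 0)"

end

theory Submission
  imports Defs
begin


lemma sdist_Suc':
  "sdist P pol nu (Suc t) = sdist P pol (\<lambda>x. \<Sum>s\<in>UNIV. nu s * Ppi P pol s x) t"
  by (induction t) auto

lemma sum_delta_mult: "(\<Sum>sa\<in>UNIV. (if sa = s then 1 else 0) * (f sa::real)) = f (s::'s::finite)"
proof -
  have *: "(\<lambda>sa. (if sa = s then 1 else 0) * f sa) = (\<lambda>sa. if sa = s then f sa else 0)" (is "?l = _") by auto
  show ?thesis unfolding * by simp
qed

lemma sdist_lin:
  "sdist P pol nu t y = (\<Sum>s\<in>UNIV. nu s * sdist P pol (\<lambda>x. if x = s then 1 else 0) t y)"
proof (induction t arbitrary: y)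
  case 0
  then show ?case by (simp add: if_distrib cong: if_cong)
next
  case (Suc t)
  have "sdist P pol nu (Suc t) y = (\<Sum>x\<in>UNIV. sdist P pol nu t x * Ppi P pol x y)" by simp
  also have "\<dots> = (\<Sum>x\<in>UNIV. (\<Sum>s\<in>UNIV. nu s * sdist P pol (\<lambda>x. if x = s then 1 else 0) t x) * Ppi P pol x y)"
    using Suc by simp
  also have "\<dots> = (\<Sum>x\<in>UNIV. \<Sum>s\<in>UNIV. nu s * sdist P pol (\<lambda>x. if x = s then 1 else 0) t x * Ppi P pol x y)"
    by (simp add: sum_distrib_right)
  also have "\<dots> = (\<Sum>s\<in>UNIV. \<Sum>x\<in>UNIV. nu s * sdist P pol (\<lambda>x. if x = s then 1 else 0) t x * Ppi P pol x y)"
    by (rule sum.swap)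
  also have "\<dots> = (\<Sum>s\<in>UNIV. nu s * (\<Sum>x\<in>UNIV. sdist P pol (\<lambda>x. if x = s then 1 else 0) t x * Ppi P pol x y))"
    by (simp add: sum_distrib_left mult.assoc)
  finally show ?case by simp
qed

locale mdpc =
  fixes P :: "'s::finite \<Rightarrow> 'a::finite \<Rightarrow> 's \<Rightarrow> real" and r :: "'s \<Rightarrow> 'a \<Rightarrow> real"
    and gamma :: real and mu :: "'s \<Rightarrow> real"
  assumes mdp: "is_MDP P r gamma" and mu_pos: "\<forall>s. mu s > 0" and mu_sum: "(\<Sum>s\<in>UNIV. mu s) = 1"
begin

lemma P_nonneg: "0 \<le> P s a s'" and P_sum: "(\<Sum>s'\<in>UNIV. P s a s') = 1"
  and r_nonneg: "0 \<le> r s a" and r_le1: "r s a \<le> 1" and g0: "0 \<le> gamma" and g1: "gamma < 1"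
  using mdp by (auto simp: is_MDP_def)

lemma Ppi_nonneg: "is_policy pol \<Longrightarrow> 0 \<le> Ppi P pol s s'"
  unfolding Ppi_def is_policy_def by (auto intro!: sum_nonneg simp: P_nonneg)

lemma Ppi_sum: "is_policy pol \<Longrightarrow> (\<Sum>s'\<in>UNIV. Ppi P pol s s') = 1"
proof -
  assume "is_policy pol"
  have "(\<Sum>s'\<in>UNIV. Ppi P pol s s') = (\<Sum>s'\<in>UNIV. \<Sum>a\<in>UNIV. pol s a * P s a s')"
    unfolding Ppi_def by simp
  also have "\<dots> = (\<Sum>a\<in>UNIV. \<Sum>s'\<in>UNIV. pol s a * P s a s')" by (rule sum.swap)
  also have "\<dots> = (\<Sum>a\<in>UNIV. pol s a * (\<Sum>s'\<in>UNIV. P s a s'))"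
    by (simp add: sum_distrib_left)
  also have "\<dots> = 1" using \<open>is_policy pol\<close> by (simp add: P_sum is_policy_def)
  finally show ?thesis .
qed

definition K where "K pol t s y = sdist P pol (\<lambda>x. if x = s then 1 else 0) t y"

lemma K_0: "K pol 0 s y = (if y = s then 1 else 0)" by (simp add: K_def)

lemma K_Suc_right: "K pol (Suc t) s y = (\<Sum>x\<in>UNIV. K pol t s x * Ppi P pol x y)"
  by (simp add: K_def)

lemma K_Suc_left: "K pol (Suc t) s y = (\<Sum>x\<in>UNIV. Ppi P pol s x * K pol t x y)"
proof -
  have "K pol (Suc t) s y = sdist P pol (\<lambda>x. Ppi P pol s x) t y"
    unfolding K_def sdist_Suc' by (simp add: sum_delta_mult)
  also have "\<dots> = (\<Sum>x\<in>UNIV. Ppi P pol s x * K pol t x y)"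
    by (subst sdist_lin) (simp add: K_def)
  finally show ?thesis .
qed

lemma K_nonneg: "is_policy pol \<Longrightarrow> 0 \<le> K pol t s y"
proof (induction t arbitrary: y)
  case 0 then show ?case by (simp add: K_0)
next
  case (Suc t) then show ?case by (simp add: K_Suc_right sum_nonneg Ppi_nonneg)
qed

lemma K_sum: "is_policy pol \<Longrightarrow> (\<Sum>y\<in>UNIV. K pol t s y) = 1"
proof (induction t)
  case 0 then show ?case by (simp add: K_0)
next
  case (Suc t)
  have "(\<Sum>y\<in>UNIV. K pol (Suc t) s y) = (\<Sum>y\<in>UNIV. \<Sum>x\<in>UNIV. K pol t s x * Ppi P pol x y)"
    by (simp add: K_Suc_right)
  also have "\<dots> = (\<Sum>x\<in>UNIV. \<Sum>y\<in>UNIV. K pol t s x * Ppi P pol x y)" by (rule sum.swap)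
  also have "\<dots> = (\<Sum>x\<in>UNIV. K pol t s x * (\<Sum>y\<in>UNIV. Ppi P pol x y))"
    by (simp add: sum_distrib_left)
  also have "\<dots> = 1" using Suc by (simp add: Ppi_sum)
  finally show ?case .
qed

lemma K_le1: "is_policy pol \<Longrightarrow> K pol t s y \<le> 1"
proof -
  assume p: "is_policy pol"
  have "K pol t s y \<le> (\<Sum>y\<in>UNIV. K pol t s y)"
    by (rule member_le_sum) (auto simp: K_nonneg p)
  then show ?thesis using K_sum[OF p] by simp
qed

lemma K_summable: "is_policy pol \<Longrightarrow> summable (\<lambda>t. gamma ^ t * K pol t s y)"
proof -
  assume p: "is_policy pol"
  show ?thesis
  proof (rule summable_comparison_test[where g = "\<lambda>t. gamma ^ t"])
    show "\<exists>N. \<forall>n\<ge>N. norm (gamma ^ n * K pol n s y) \<le> gamma ^ n"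
    proof (intro exI allI impI)
      fix n :: nat
      have "norm (gamma ^ n * K pol n s y) = gamma ^ n * K pol n s y"
        using K_nonneg[OF p] g0 by simp
      also have "\<dots> \<le> gamma ^ n * 1"
        by (rule mult_left_mono) (use K_le1[OF p] g0 in auto)
      finally show "norm (gamma ^ n * K pol n s y) \<le> gamma ^ n" by simp
    qed
    show "summable (\<lambda>t. gamma ^ t)" using g0 g1 by (simp add: summable_geometric)
  qed
qed

definition MM where "MM pol s y = (\<Sum>t. gamma ^ t * K pol t s y)"

lemma MM_nonneg: "is_policy pol \<Longrightarrow> 0 \<le> MM pol s y"
  unfolding MM_def by (intro suminf_nonneg K_summable) (auto simp: K_nonneg g0)

lemma MM_rowsum: "is_policy pol \<Longrightarrow> (\<Sum>y\<in>UNIV. MM pol s y) = 1 / (1 - gamma)"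
proof -
  assume p: "is_policy pol"
  have "(\<Sum>y\<in>UNIV. MM pol s y) = (\<Sum>t. \<Sum>y\<in>UNIV. gamma ^ t * K pol t s y)"
    unfolding MM_def by (rule suminf_sum[symmetric]) (rule K_summable[OF p])
  also have "\<dots> = (\<Sum>t. gamma ^ t)"
  proof -
    have "\<And>t. (\<Sum>y\<in>UNIV. gamma ^ t * K pol t s y) = gamma ^ t * (\<Sum>y\<in>UNIV. K pol t s y)"
      by (rule sum_distrib_left[symmetric])
    then show ?thesis by (simp add: K_sum[OF p])
  qed
  also have "\<dots> = 1 / (1 - gamma)" using g0 g1 by (simp add: suminf_geometric)
  finally show ?thesis .
qed

lemma MM_le: "is_policy pol \<Longrightarrow> MM pol s y \<le> 1 / (1 - gamma)"
proof -
  assume p: "is_policy pol"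
  have "MM pol s y \<le> (\<Sum>y\<in>UNIV. MM pol s y)"
    by (rule member_le_sum) (auto simp: MM_nonneg p)
  then show ?thesis using MM_rowsum[OF p] by simp
qed

lemma MM_right: "is_policy pol \<Longrightarrow>
   MM pol s y = (if y = s then 1 else 0) + gamma * (\<Sum>x\<in>UNIV. Ppi P pol s x * MM pol x y)"
proof -
  assume p: "is_policy pol"
  have sm: "summable (\<lambda>t. gamma ^ t * K pol t s y)" by (rule K_summable[OF p])
  have S1: "\<And>x. summable (\<lambda>t. Ppi P pol s x * (gamma ^ t * K pol t x y))"
    by (rule summable_mult[OF K_summable[OF p]])
  have S2: "summable (\<lambda>t. \<Sum>x\<in>UNIV. Ppi P pol s x * (gamma ^ t * K pol t x y))"
    by (rule summable_sum) (rule S1)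
  have "(\<Sum>t. gamma ^ Suc t * K pol (Suc t) s y) = MM pol s y - K pol 0 s y"
    unfolding MM_def using suminf_split_head[OF sm] by simp
  moreover have "(\<Sum>t. gamma ^ Suc t * K pol (Suc t) s y)
      = gamma * (\<Sum>x\<in>UNIV. Ppi P pol s x * MM pol x y)"
  proof -
    have e: "\<And>t. gamma ^ Suc t * K pol (Suc t) s y
        = gamma * (\<Sum>x\<in>UNIV. Ppi P pol s x * (gamma ^ t * K pol t x y))"
      by (simp add: K_Suc_left sum_distrib_left mult_ac)
    have "(\<Sum>t. gamma ^ Suc t * K pol (Suc t) s y)
        = (\<Sum>t. gamma * (\<Sum>x\<in>UNIV. Ppi P pol s x * (gamma ^ t * K pol t x y)))"
      by (simp only: e)
    also have "\<dots> = gamma * (\<Sum>t. \<Sum>x\<in>UNIV. Ppi P pol s x * (gamma ^ t * K pol t x y))"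
      by (rule suminf_mult[OF S2])
    also have "(\<Sum>t. \<Sum>x\<in>UNIV. Ppi P pol s x * (gamma ^ t * K pol t x y))
        = (\<Sum>x\<in>UNIV. \<Sum>t. Ppi P pol s x * (gamma ^ t * K pol t x y))"
      by (rule suminf_sum) (rule S1)
    also have "\<dots> = (\<Sum>x\<in>UNIV. Ppi P pol s x * MM pol x y)"
      unfolding MM_def by (rule sum.cong[OF refl], rule suminf_mult[OF K_summable[OF p]])
    finally show ?thesis .
  qed
  ultimately show ?thesis by (simp add: K_0)
qed

lemma MM_left: "is_policy pol \<Longrightarrow>
   MM pol s y = (if y = s then 1 else 0) + gamma * (\<Sum>x\<in>UNIV. MM pol s x * Ppi P pol x y)"
proof -
  assume p: "is_policy pol"
  have sm: "summable (\<lambda>t. gamma ^ t * K pol t s y)" by (rule K_summable[OF p])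
  have S1: "\<And>x. summable (\<lambda>t. (gamma ^ t * K pol t s x) * Ppi P pol x y)"
    by (rule summable_mult2[OF K_summable[OF p]])
  have S2: "summable (\<lambda>t. \<Sum>x\<in>UNIV. (gamma ^ t * K pol t s x) * Ppi P pol x y)"
    by (rule summable_sum) (rule S1)
  have "(\<Sum>t. gamma ^ Suc t * K pol (Suc t) s y) = MM pol s y - K pol 0 s y"
    unfolding MM_def using suminf_split_head[OF sm] by simp
  moreover have "(\<Sum>t. gamma ^ Suc t * K pol (Suc t) s y)
      = gamma * (\<Sum>x\<in>UNIV. MM pol s x * Ppi P pol x y)"
  proof -
    have e: "\<And>t. gamma ^ Suc t * K pol (Suc t) s y
        = gamma * (\<Sum>x\<in>UNIV. (gamma ^ t * K pol t s x) * Ppi P pol x y)"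
      by (simp add: K_Suc_right sum_distrib_left mult_ac)
    have "(\<Sum>t. gamma ^ Suc t * K pol (Suc t) s y)
        = (\<Sum>t. gamma * (\<Sum>x\<in>UNIV. (gamma ^ t * K pol t s x) * Ppi P pol x y))"
      by (simp only: e)
    also have "\<dots> = gamma * (\<Sum>t. \<Sum>x\<in>UNIV. (gamma ^ t * K pol t s x) * Ppi P pol x y)"
      by (rule suminf_mult[OF S2])
    also have "(\<Sum>t. \<Sum>x\<in>UNIV. (gamma ^ t * K pol t s x) * Ppi P pol x y)
        = (\<Sum>x\<in>UNIV. \<Sum>t. (gamma ^ t * K pol t s x) * Ppi P pol x y)"
      by (rule suminf_sum) (rule S1)
    also have "\<dots> = (\<Sum>x\<in>UNIV. MM pol s x * Ppi P pol x y)"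
      unfolding MM_def by (rule sum.cong[OF refl], rule suminf_mult2[OF K_summable[OF p], symmetric])
    finally show ?thesis .
  qed
  ultimately show ?thesis by (simp add: K_0)
qed

end

lemma sum_if_eq1: "(\<Sum>x\<in>UNIV. f x * (if y = x then 1 else 0)) = (f (y::'s::finite) :: real)"
proof -
  have *: "(\<lambda>x. f x * (if y = x then 1 else 0)) = (\<lambda>x. if y = x then f x else 0)" by auto
  show ?thesis unfolding * by simp
qed
lemma sum_if_eq2: "(\<Sum>x\<in>UNIV. f x * (if x = y then 1 else 0)) = (f (y::'s::finite) :: real)"
proof -
  have *: "(\<lambda>x. f x * (if x = y then 1 else 0)) = (\<lambda>x. if x = y then f x else 0)" by auto
  show ?thesis unfolding * by simp
qed
lemma sum_if_eq3: "(\<Sum>x\<in>UNIV. (if x = y then 1 else 0) * f x) = (f (y::'s::finite) :: real)"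
proof -
  have *: "(\<lambda>x. (if x = y then 1 else 0) * f x) = (\<lambda>x. if x = y then f x else 0)" by auto
  show ?thesis unfolding * by simp
qed
lemma sum_if_eq4: "(\<Sum>x\<in>UNIV. (if y = x then 1 else 0) * f x) = (f (y::'s::finite) :: real)"
proof -
  have *: "(\<lambda>x. (if y = x then 1 else 0) * f x) = (\<lambda>x. if y = x then f x else 0)" by auto
  show ?thesis unfolding * by simp
qed
lemmas sum_if_eqs = sum_if_eq1 sum_if_eq2 sum_if_eq3 sum_if_eq4

context mdpc begin

definition rp where "rp pol s = (\<Sum>a\<in>UNIV. pol s a * r s a)"
definition VV where "VV pol s = (\<Sum>y\<in>UNIV. MM pol s y * rp pol y)"
definition rho where "rho pol y = (\<Sum>s\<in>UNIV. mu s * MM pol s y)"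

lemma Vs_eq: "is_policy pol \<Longrightarrow> Vs P r gamma pol s = VV pol s"
proof -
  assume p: "is_policy pol"
  have "Vs P r gamma pol s = (\<Sum>t. \<Sum>y\<in>UNIV. (gamma ^ t * K pol t s y) * rp pol y)"
    unfolding Vs_def K_def rp_def by (simp add: sum_distrib_left mult.assoc)
  also have "\<dots> = (\<Sum>y\<in>UNIV. \<Sum>t. (gamma ^ t * K pol t s y) * rp pol y)"
    by (rule suminf_sum) (rule summable_mult2[OF K_summable[OF p]])
  also have "\<dots> = VV pol s"
    unfolding VV_def MM_def by (rule sum.cong[OF refl], rule suminf_mult2[OF K_summable[OF p], symmetric])
  finally show ?thesis .
qed

lemma dvisit_eq: "is_policy pol \<Longrightarrow> dvisit P gamma pol mu y = (1 - gamma) * rho pol y"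
proof -
  assume p: "is_policy pol"
  have "(\<Sum>t. gamma ^ t * sdist P pol mu t y) = (\<Sum>t. \<Sum>s\<in>UNIV. mu s * (gamma ^ t * K pol t s y))"
    by (subst sdist_lin) (simp add: K_def sum_distrib_left mult_ac)
  also have "\<dots> = (\<Sum>s\<in>UNIV. \<Sum>t. mu s * (gamma ^ t * K pol t s y))"
    by (rule suminf_sum) (rule summable_mult[OF K_summable[OF p]])
  also have "\<dots> = rho pol y"
    unfolding rho_def MM_def by (rule sum.cong[OF refl], rule suminf_mult[OF K_summable[OF p]])
  finally show ?thesis unfolding dvisit_def by simp
qed

lemma rho_eq: "is_policy pol \<Longrightarrow> rho pol y = mu y + gamma * (\<Sum>x\<in>UNIV. rho pol x * Ppi P pol x y)"
proof -
  assume p: "is_policy pol"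
  have "rho pol y = (\<Sum>s\<in>UNIV. mu s * ((if y = s then 1 else 0) + gamma * (\<Sum>x\<in>UNIV. MM pol s x * Ppi P pol x y)))"
    unfolding rho_def by (rule sum.cong[OF refl]) (subst MM_left[OF p], simp)
  also have "\<dots> = (\<Sum>s\<in>UNIV. mu s * (if y = s then 1 else 0)) + gamma * (\<Sum>s\<in>UNIV. \<Sum>x\<in>UNIV. mu s * MM pol s x * Ppi P pol x y)"
    by (simp add: distrib_left sum.distrib sum_distrib_left mult_ac)
  also have "\<dots> = mu y + gamma * (\<Sum>s\<in>UNIV. \<Sum>x\<in>UNIV. mu s * MM pol s x * Ppi P pol x y)"
    by (simp only: sum_if_eqs)
  also have "(\<Sum>s\<in>UNIV. \<Sum>x\<in>UNIV. mu s * MM pol s x * Ppi P pol x y) = (\<Sum>x\<in>UNIV. \<Sum>s\<in>UNIV. mu s * MM pol s x * Ppi P pol x y)"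
    by (rule sum.swap)
  also have "\<dots> = (\<Sum>x\<in>UNIV. rho pol x * Ppi P pol x y)"
    unfolding rho_def by (simp add: sum_distrib_right)
  finally show ?thesis .
qed

lemma rho_ge_mu: "is_policy pol \<Longrightarrow> mu y \<le> rho pol y"
  using rho_eq[of pol y] g0
  by (simp add: sum_nonneg mult_nonneg_nonneg Ppi_nonneg MM_nonneg rho_def mu_pos less_imp_le)

lemma rho_pos: "is_policy pol \<Longrightarrow> 0 < rho pol y"
  using rho_ge_mu[of pol y] mu_pos by (meson less_le_trans)

lemma VV_eq: "is_policy pol \<Longrightarrow> VV pol s = rp pol s + gamma * (\<Sum>x\<in>UNIV. Ppi P pol s x * VV pol x)"
proof -
  assume p: "is_policy pol"
  have "VV pol s = (\<Sum>y\<in>UNIV. ((if y = s then 1 else 0) + gamma * (\<Sum>x\<in>UNIV. Ppi P pol s x * MM pol x y)) * rp pol y)"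
    unfolding VV_def by (rule sum.cong[OF refl]) (subst MM_right[OF p], simp)
  also have "\<dots> = (\<Sum>y\<in>UNIV. (if y = s then 1 else 0) * rp pol y) + (\<Sum>y\<in>UNIV. gamma * (\<Sum>x\<in>UNIV. Ppi P pol s x * MM pol x y) * rp pol y)"
    by (simp only: distrib_right sum.distrib)
  also have "\<dots> = rp pol s + gamma * (\<Sum>y\<in>UNIV. \<Sum>x\<in>UNIV. Ppi P pol s x * MM pol x y * rp pol y)"
    by (simp only: sum_if_eqs) (simp add: sum_distrib_left sum_distrib_right mult_ac)
  also have "(\<Sum>y\<in>UNIV. \<Sum>x\<in>UNIV. Ppi P pol s x * MM pol x y * rp pol y) = (\<Sum>x\<in>UNIV. \<Sum>y\<in>UNIV. Ppi P pol s x * MM pol x y * rp pol y)"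
    by (rule sum.swap)
  also have "\<dots> = (\<Sum>x\<in>UNIV. Ppi P pol s x * VV pol x)"
    unfolding VV_def by (simp add: sum_distrib_left mult_ac)
  finally show ?thesis .
qed

lemma resolvent:
  assumes p: "is_policy p" and q: "is_policy q"
  shows "MM q s y - MM p s y = gamma * (\<Sum>x\<in>UNIV. \<Sum>z\<in>UNIV. MM q s x * (Ppi P q x z - Ppi P p x z) * MM p z y)"
proof -
  have a: "(\<Sum>x\<in>UNIV. MM q s x * MM p x y) - gamma * (\<Sum>x\<in>UNIV. \<Sum>z\<in>UNIV. MM q s x * Ppi P p x z * MM p z y) = MM q s y"
  proof -
    have "(\<Sum>x\<in>UNIV. MM q s x * MM p x y) - gamma * (\<Sum>x\<in>UNIV. \<Sum>z\<in>UNIV. MM q s x * Ppi P p x z * MM p z y)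
       = (\<Sum>x\<in>UNIV. MM q s x * (MM p x y - gamma * (\<Sum>z\<in>UNIV. Ppi P p x z * MM p z y)))"
      by (simp add: right_diff_distrib sum_subtractf sum_distrib_left mult_ac)
    also have "\<dots> = (\<Sum>x\<in>UNIV. MM q s x * (if y = x then 1 else 0))"
    proof (rule sum.cong[OF refl])
      fix x
      have "MM p x y - gamma * (\<Sum>z\<in>UNIV. Ppi P p x z * MM p z y) = (if y = x then 1 else 0)"
        using MM_right[OF p, of x y] by linarith
      then show "MM q s x * (MM p x y - gamma * (\<Sum>z\<in>UNIV. Ppi P p x z * MM p z y)) = MM q s x * (if y = x then 1 else 0)"
        by simp
    qed
    also have "\<dots> = MM q s y" by (simp only: sum_if_eqs)
    finally show ?thesis .
  qed
  have b: "(\<Sum>x\<in>UNIV. MM q s x * MM p x y) - gamma * (\<Sum>x\<in>UNIV. \<Sum>z\<in>UNIV. MM q s x * Ppi P q x z * MM p z y) = MM p s y"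
  proof -
    have "(\<Sum>x\<in>UNIV. \<Sum>z\<in>UNIV. MM q s x * Ppi P q x z * MM p z y) = (\<Sum>z\<in>UNIV. \<Sum>x\<in>UNIV. MM q s x * Ppi P q x z * MM p z y)"
      by (rule sum.swap)
    moreover have "(\<Sum>z\<in>UNIV. (MM q s z - gamma * (\<Sum>x\<in>UNIV. MM q s x * Ppi P q x z)) * MM p z y)
       = (\<Sum>z\<in>UNIV. MM q s z * MM p z y) - gamma * (\<Sum>z\<in>UNIV. \<Sum>x\<in>UNIV. MM q s x * Ppi P q x z * MM p z y)"
      by (simp add: left_diff_distrib sum_subtractf sum_distrib_left sum_distrib_right mult.assoc)
    ultimately have "(\<Sum>x\<in>UNIV. MM q s x * MM p x y) - gamma * (\<Sum>x\<in>UNIV. \<Sum>z\<in>UNIV. MM q s x * Ppi P q x z * MM p z y)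
       = (\<Sum>z\<in>UNIV. (MM q s z - gamma * (\<Sum>x\<in>UNIV. MM q s x * Ppi P q x z)) * MM p z y)"
      by simp
    also have "\<dots> = (\<Sum>z\<in>UNIV. (if z = s then 1 else 0) * MM p z y)"
    proof (rule sum.cong[OF refl])
      fix z
      have "MM q s z - gamma * (\<Sum>x\<in>UNIV. MM q s x * Ppi P q x z) = (if z = s then 1 else 0)"
        using MM_left[OF q, of s z] by linarith
      then show "(MM q s z - gamma * (\<Sum>x\<in>UNIV. MM q s x * Ppi P q x z)) * MM p z y = (if z = s then 1 else 0) * MM p z y"
        by simp
    qed
    also have "\<dots> = MM p s y" by (simp only: sum_if_eqs)
    finally show ?thesis .
  qed
  have c: "gamma * (\<Sum>x\<in>UNIV. \<Sum>z\<in>UNIV. MM q s x * (Ppi P q x z - Ppi P p x z) * MM p z y)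
     = gamma * (\<Sum>x\<in>UNIV. \<Sum>z\<in>UNIV. MM q s x * Ppi P q x z * MM p z y) - gamma * (\<Sum>x\<in>UNIV. \<Sum>z\<in>UNIV. MM q s x * Ppi P p x z * MM p z y)"
    by (simp add: right_diff_distrib left_diff_distrib sum_subtractf)
  show ?thesis using a b c by linarith
qed

end

lemma sum_swap3: "(\<Sum>y\<in>A. \<Sum>x\<in>B. \<Sum>z\<in>C. f x z y) = (\<Sum>x\<in>B. \<Sum>z\<in>C. \<Sum>y\<in>A. (f x z y :: real))"
proof -
  have "(\<Sum>y\<in>A. \<Sum>x\<in>B. \<Sum>z\<in>C. f x z y) = (\<Sum>x\<in>B. \<Sum>y\<in>A. \<Sum>z\<in>C. f x z y)"
    by (rule sum.swap)
  also have "\<dots> = (\<Sum>x\<in>B. \<Sum>z\<in>C. \<Sum>y\<in>A. f x z y)"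
    by (rule sum.cong[OF refl]) (rule sum.swap)
  finally show ?thesis .
qed

context mdpc begin
definition Qf where "Qf p x a = r x a + gamma * (\<Sum>z\<in>UNIV. P x a z * VV p z)"

end

locale polline = mdpc P r gamma mu
  for P :: "'s::finite \<Rightarrow> 'a::finite \<Rightarrow> 's \<Rightarrow> real" and r gamma mu +
  fixes pol :: "real \<Rightarrow> 's::finite \<Rightarrow> 'a::finite \<Rightarrow> real" and t0 :: real and dpol :: "'s \<Rightarrow> 'a \<Rightarrow> real"
  assumes polp: "\<And>t. is_policy (pol t)"
    and dpolD: "\<And>s a. DERIV (\<lambda>t. pol t s a) t0 :> dpol s a"
begin

lemma Ppi_deriv: "DERIV (\<lambda>t. Ppi P (pol t) x z) t0 :> (\<Sum>a\<in>UNIV. dpol x a * P x a z)"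
  unfolding Ppi_def by (rule DERIV_sum) (rule DERIV_cmult_right[OF dpolD])

lemma Ppi_tendsto: "((\<lambda>t. Ppi P (pol t) x z) \<longlongrightarrow> Ppi P (pol t0) x z) (at t0)"
  using DERIV_isCont[OF Ppi_deriv] by (simp add: isCont_def)

lemma MM_tendsto: "((\<lambda>t. MM (pol t) s y) \<longlongrightarrow> MM (pol t0) s y) (at t0)"
proof -
  define B where "B = 1 / (1 - gamma)"
  have Bnn: "0 \<le> B" using g1 by (simp add: B_def)
  have bound: "norm (MM (pol t) s y - MM (pol t0) s y)
      \<le> gamma * (\<Sum>x\<in>UNIV. \<Sum>z\<in>UNIV. B * \<bar>Ppi P (pol t) x z - Ppi P (pol t0) x z\<bar> * B)" for t
  proof -
    have "norm (MM (pol t) s y - MM (pol t0) s y)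
        = gamma * \<bar>\<Sum>x\<in>UNIV. \<Sum>z\<in>UNIV. MM (pol t) s x * (Ppi P (pol t) x z - Ppi P (pol t0) x z) * MM (pol t0) z y\<bar>"
      using resolvent[OF polp[of t0] polp[of t], of s y] g0 by (simp add: abs_mult)
    also have "\<dots> \<le> gamma * (\<Sum>x\<in>UNIV. \<Sum>z\<in>UNIV. B * \<bar>Ppi P (pol t) x z - Ppi P (pol t0) x z\<bar> * B)"
    proof (rule mult_left_mono[OF _ g0])
      have "\<bar>\<Sum>x\<in>UNIV. \<Sum>z\<in>UNIV. MM (pol t) s x * (Ppi P (pol t) x z - Ppi P (pol t0) x z) * MM (pol t0) z y\<bar>
          \<le> (\<Sum>x\<in>UNIV. \<bar>\<Sum>z\<in>UNIV. MM (pol t) s x * (Ppi P (pol t) x z - Ppi P (pol t0) x z) * MM (pol t0) z y\<bar>)"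
        by (rule sum_abs)
      also have "\<dots> \<le> (\<Sum>x\<in>UNIV. \<Sum>z\<in>UNIV. \<bar>MM (pol t) s x * (Ppi P (pol t) x z - Ppi P (pol t0) x z) * MM (pol t0) z y\<bar>)"
        by (rule sum_mono) (rule sum_abs)
      also have "\<dots> \<le> (\<Sum>x\<in>UNIV. \<Sum>z\<in>UNIV. B * \<bar>Ppi P (pol t) x z - Ppi P (pol t0) x z\<bar> * B)"
      proof (intro sum_mono)
        fix x z
        have m1: "\<bar>MM (pol t) s x\<bar> \<le> B" using MM_le[OF polp] MM_nonneg[OF polp] by (simp add: B_def)
        have m2: "\<bar>MM (pol t0) z y\<bar> \<le> B" using MM_le[OF polp] MM_nonneg[OF polp] by (simp add: B_def)
        show "\<bar>MM (pol t) s x * (Ppi P (pol t) x z - Ppi P (pol t0) x z) * MM (pol t0) z y\<bar>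
            \<le> B * \<bar>Ppi P (pol t) x z - Ppi P (pol t0) x z\<bar> * B"
          unfolding abs_mult by (intro mult_mono m1 m2) (auto simp: Bnn)
      qed
      finally show "\<bar>\<Sum>x\<in>UNIV. \<Sum>z\<in>UNIV. MM (pol t) s x * (Ppi P (pol t) x z - Ppi P (pol t0) x z) * MM (pol t0) z y\<bar>
          \<le> (\<Sum>x\<in>UNIV. \<Sum>z\<in>UNIV. B * \<bar>Ppi P (pol t) x z - Ppi P (pol t0) x z\<bar> * B)" .
    qed
    finally show ?thesis .
  qed
  have lim: "((\<lambda>t. gamma * (\<Sum>x\<in>UNIV. \<Sum>z\<in>UNIV. B * \<bar>Ppi P (pol t) x z - Ppi P (pol t0) x z\<bar> * B)) \<longlongrightarrow>
      gamma * (\<Sum>x\<in>UNIV. \<Sum>z\<in>UNIV. B * \<bar>Ppi P (pol t0) x z - Ppi P (pol t0) x z\<bar> * B)) (at t0)"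
    by (intro tendsto_intros Ppi_tendsto)
  have "((\<lambda>t. MM (pol t) s y - MM (pol t0) s y) \<longlongrightarrow> 0) (at t0)"
    by (rule Lim_null_comparison[OF always_eventually[OF allI[OF bound]]]) (use lim in simp)
  then show ?thesis by (rule LIM_zero_cancel)
qed

lemma MM_deriv: "DERIV (\<lambda>t. MM (pol t) s y) t0 :>
   gamma * (\<Sum>x\<in>UNIV. \<Sum>z\<in>UNIV. MM (pol t0) s x * (\<Sum>a\<in>UNIV. dpol x a * P x a z) * MM (pol t0) z y)"
proof -
  have eq: "(\<lambda>h. (MM (pol (t0 + h)) s y - MM (pol t0) s y) / h) =
     (\<lambda>h. gamma * (\<Sum>x\<in>UNIV. \<Sum>z\<in>UNIV. MM (pol (t0 + h)) s x * ((Ppi P (pol (t0 + h)) x z - Ppi P (pol t0) x z) / h) * MM (pol t0) z y))"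
    by (rule ext, subst resolvent[OF polp polp]) (simp add: divide_inverse sum_distrib_right sum_distrib_left mult_ac)
  have l1: "((\<lambda>h. MM (pol (t0 + h)) s x) \<longlongrightarrow> MM (pol t0) s x) (at 0)" for x
    by (rule LIM_offset_zero[OF MM_tendsto])
  have l2: "((\<lambda>h. (Ppi P (pol (t0 + h)) x z - Ppi P (pol t0) x z) / h) \<longlongrightarrow> (\<Sum>a\<in>UNIV. dpol x a * P x a z)) (at 0)" for x z
    using Ppi_deriv[of x z] by (simp add: DERIV_def)
  show ?thesis unfolding DERIV_def eq
    by (intro tendsto_intros l1 l2)
qed

end

context polline begin

definition dP where "dP x z = (\<Sum>a\<in>UNIV. dpol x a * P x a z)"
definition drp where "drp x = (\<Sum>a\<in>UNIV. dpol x a * r x a)"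
definition bb where "bb x = (\<Sum>a\<in>UNIV. dpol x a * Qf (pol t0) x a)"

lemma MM_deriv': "DERIV (\<lambda>t. MM (pol t) s y) t0 :>
   gamma * (\<Sum>x\<in>UNIV. \<Sum>z\<in>UNIV. MM (pol t0) s x * dP x z * MM (pol t0) z y)"
  using MM_deriv unfolding dP_def .

lemma rp_deriv: "DERIV (\<lambda>t. rp (pol t) x) t0 :> drp x"
  unfolding rp_def drp_def by (rule DERIV_sum) (rule DERIV_cmult_right[OF dpolD])

lemma bb_eq: "bb x = drp x + gamma * (\<Sum>z\<in>UNIV. dP x z * VV (pol t0) z)"
proof -
  have "bb x = drp x + gamma * (\<Sum>a\<in>UNIV. \<Sum>z\<in>UNIV. dpol x a * P x a z * VV (pol t0) z)"
    unfolding bb_def Qf_def drp_def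
    by (simp add: distrib_left sum.distrib sum_distrib_left mult.assoc mult.left_commute[of gamma])
  also have "(\<Sum>a\<in>UNIV. \<Sum>z\<in>UNIV. dpol x a * P x a z * VV (pol t0) z) = (\<Sum>z\<in>UNIV. \<Sum>a\<in>UNIV. dpol x a * P x a z * VV (pol t0) z)"
    by (rule sum.swap)
  also have "\<dots> = (\<Sum>z\<in>UNIV. dP x z * VV (pol t0) z)"
    unfolding dP_def by (simp add: sum_distrib_right)
  finally show ?thesis .
qed

lemma VV_deriv: "DERIV (\<lambda>t. VV (pol t) s) t0 :> (\<Sum>x\<in>UNIV. MM (pol t0) s x * bb x)"
proof -
  let ?M = "MM (pol t0)"
  have raw: "DERIV (\<lambda>t. VV (pol t) s) t0 :>
     (\<Sum>y\<in>UNIV. gamma * (\<Sum>x\<in>UNIV. \<Sum>z\<in>UNIV. ?M s x * dP x z * ?M z y) * rp (pol t0) y + drp y * ?M s y)"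
    unfolding VV_def by (rule DERIV_sum, rule DERIV_mult[OF MM_deriv' rp_deriv])
  have e1: "(\<Sum>y\<in>UNIV. gamma * (\<Sum>x\<in>UNIV. \<Sum>z\<in>UNIV. ?M s x * dP x z * ?M z y) * rp (pol t0) y)
     = gamma * (\<Sum>x\<in>UNIV. \<Sum>z\<in>UNIV. ?M s x * dP x z * VV (pol t0) z)"
  proof -
    have "(\<Sum>y\<in>UNIV. gamma * (\<Sum>x\<in>UNIV. \<Sum>z\<in>UNIV. ?M s x * dP x z * ?M z y) * rp (pol t0) y)
       = gamma * (\<Sum>y\<in>UNIV. \<Sum>x\<in>UNIV. \<Sum>z\<in>UNIV. ?M s x * dP x z * (?M z y * rp (pol t0) y))"
      by (simp add: sum_distrib_left sum_distrib_right mult.assoc)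
    also have "\<dots> = gamma * (\<Sum>x\<in>UNIV. \<Sum>z\<in>UNIV. \<Sum>y\<in>UNIV. ?M s x * dP x z * (?M z y * rp (pol t0) y))"
      by (subst sum_swap3, rule refl)
    also have "\<dots> = gamma * (\<Sum>x\<in>UNIV. \<Sum>z\<in>UNIV. ?M s x * dP x z * VV (pol t0) z)"
      unfolding VV_def by (simp only: sum_distrib_left)
    finally show ?thesis .
  qed
  have e2: "(\<Sum>x\<in>UNIV. ?M s x * bb x)
     = (\<Sum>x\<in>UNIV. ?M s x * drp x) + gamma * (\<Sum>x\<in>UNIV. \<Sum>z\<in>UNIV. ?M s x * dP x z * VV (pol t0) z)"
    unfolding bb_eq by (simp add: distrib_left sum.distrib sum_distrib_left mult.assoc mult.left_commute[of gamma])
  have "(\<Sum>y\<in>UNIV. gamma * (\<Sum>x\<in>UNIV. \<Sum>z\<in>UNIV. ?M s x * dP x z * ?M z y) * rp (pol t0) y + drp y * ?M s y)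
     = (\<Sum>x\<in>UNIV. ?M s x * bb x)"
    unfolding sum.distrib e1 e2 by (simp add: mult.commute)
  then show ?thesis using raw by simp
qed

lemma rho_deriv: "DERIV (\<lambda>t. rho (pol t) y) t0 :>
   gamma * (\<Sum>x\<in>UNIV. \<Sum>z\<in>UNIV. rho (pol t0) x * dP x z * MM (pol t0) z y)"
proof -
  let ?M = "MM (pol t0)"
  have raw: "DERIV (\<lambda>t. rho (pol t) y) t0 :>
     (\<Sum>s\<in>UNIV. mu s * (gamma * (\<Sum>x\<in>UNIV. \<Sum>z\<in>UNIV. ?M s x * dP x z * ?M z y)))"
    unfolding rho_def by (rule DERIV_sum, rule DERIV_cmult[OF MM_deriv'])
  have "(\<Sum>s\<in>UNIV. mu s * (gamma * (\<Sum>x\<in>UNIV. \<Sum>z\<in>UNIV. ?M s x * dP x z * ?M z y)))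
     = gamma * (\<Sum>s\<in>UNIV. \<Sum>x\<in>UNIV. \<Sum>z\<in>UNIV. mu s * ?M s x * dP x z * ?M z y)"
    by (simp add: sum_distrib_left mult.assoc mult.left_commute[of gamma])
  also have "\<dots> = gamma * (\<Sum>x\<in>UNIV. \<Sum>z\<in>UNIV. \<Sum>s\<in>UNIV. mu s * ?M s x * dP x z * ?M z y)"
    by (subst sum_swap3, rule refl)
  also have "\<dots> = gamma * (\<Sum>x\<in>UNIV. \<Sum>z\<in>UNIV. rho (pol t0) x * dP x z * ?M z y)"
    unfolding rho_def by (simp add: sum_distrib_right)
  finally show ?thesis using raw by simp
qed

lemma Qf_deriv: "DERIV (\<lambda>t. Qf (pol t) x a) t0 :>
   gamma * (\<Sum>z\<in>UNIV. P x a z * (\<Sum>y\<in>UNIV. MM (pol t0) z y * bb y))"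
proof -
  have e: "(\<lambda>t. Qf (pol t) x a) = (\<lambda>t. r x a + gamma * (\<Sum>z\<in>UNIV. P x a z * VV (pol t) z))"
    by (rule ext) (simp add: Qf_def)
  show ?thesis unfolding e
    by (rule DERIV_cong[OF DERIV_add[OF DERIV_const DERIV_cmult[OF DERIV_sum[OF DERIV_cmult[OF VV_deriv]]]]]) simp
qed

end


lemma softmax_pos: "0 < softmax th s a"
  unfolding softmax_def by (intro divide_pos_pos exp_gt_zero sum_pos) auto

lemma softmax_sum: "(\<Sum>a\<in>UNIV. softmax th s a) = 1"
proof -
  have "(\<Sum>a'\<in>UNIV. exp (th $ (s, a'))) > 0" by (intro sum_pos) auto
  then show ?thesis unfolding softmax_def by (simp add: sum_divide_distrib[symmetric])
qed

lemma softmax_policy: "is_policy (softmax th)"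
  unfolding is_policy_def using softmax_pos softmax_sum less_imp_le by blast

lemma softmax_deriv:
  fixes th0 u :: "real ^ ('s::finite \<times> 'a::finite)"
  shows "DERIV (\<lambda>t. softmax (th0 + t *\<^sub>R u) s a) t0 :>
    softmax (th0 + t0 *\<^sub>R u) s a * (u $ (s, a) - (\<Sum>b\<in>UNIV. softmax (th0 + t0 *\<^sub>R u) s b * u $ (s, b)))"
proof -
  define E where "E t b = exp (th0 $ (s, b) + t * u $ (s, b))" for t b
  define Z where "Z t = (\<Sum>b\<in>UNIV. E t b)" for t
  have sm: "softmax (th0 + t *\<^sub>R u) s b = E t b / Z t" for t b
    unfolding softmax_def E_def Z_def by simp
  have dE: "DERIV (\<lambda>t. E t b) t0 :> E t0 b * u $ (s, b)" for b
    unfolding E_def by (auto intro!: derivative_eq_intros)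
  have dZ: "DERIV Z t0 :> (\<Sum>b\<in>UNIV. E t0 b * u $ (s, b))"
    unfolding Z_def[abs_def] by (rule DERIV_sum) (rule dE)
  have Zpos: "Z t0 > 0" unfolding Z_def E_def by (intro sum_pos) auto
  have "DERIV (\<lambda>t. E t a / Z t) t0 :>
     (E t0 a * u $ (s, a) * Z t0 - E t0 a * (\<Sum>b\<in>UNIV. E t0 b * u $ (s, b))) / (Z t0 * Z t0)"
    by (rule DERIV_divide[OF dE dZ]) (use Zpos in simp)
  moreover have "(E t0 a * u $ (s, a) * Z t0 - E t0 a * (\<Sum>b\<in>UNIV. E t0 b * u $ (s, b))) / (Z t0 * Z t0)
     = E t0 a / Z t0 * (u $ (s, a) - (\<Sum>b\<in>UNIV. E t0 b / Z t0 * u $ (s, b)))"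
    using Zpos by (simp add: field_simps sum_divide_distrib[symmetric] sum_distrib_left)
  ultimately show ?thesis unfolding sm by simp
qed



lemma sum_pairs: "(\<Sum>i\<in>UNIV. f i) = (\<Sum>s\<in>UNIV. \<Sum>a\<in>UNIV. (f (s, a) :: real))"
  by (simp add: UNIV_Times_UNIV[symmetric] sum.cartesian_product del: UNIV_Times_UNIV)

context mdpc begin

definition Gf where
  "Gf th s a = rho (softmax th) s * softmax th s a * (Qf (softmax th) s a - VV (softmax th) s)"

definition Gv where "Gv th = (\<chi> i. Gf th (fst i) (snd i))"

lemma VQ: "is_policy p \<Longrightarrow> VV p s = (\<Sum>a\<in>UNIV. p s a * Qf p s a)"
proof -
  assume pp: "is_policy p"
  have "(\<Sum>a\<in>UNIV. p s a * Qf p s a) = rp p s + gamma * (\<Sum>a\<in>UNIV. \<Sum>z\<in>UNIV. p s a * P s a z * VV p z)"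
    unfolding Qf_def rp_def by (simp add: distrib_left sum.distrib sum_distrib_left mult.assoc mult.left_commute[of gamma])
  also have "(\<Sum>a\<in>UNIV. \<Sum>z\<in>UNIV. p s a * P s a z * VV p z) = (\<Sum>z\<in>UNIV. \<Sum>a\<in>UNIV. p s a * P s a z * VV p z)"
    by (rule sum.swap)
  also have "\<dots> = (\<Sum>z\<in>UNIV. Ppi P p s z * VV p z)"
    unfolding Ppi_def by (simp add: sum_distrib_right)
  finally show ?thesis using VV_eq[OF pp, of s] by simp
qed

lemma sum_piA: "is_policy p \<Longrightarrow> (\<Sum>a\<in>UNIV. p s a * (Qf p s a - VV p s)) = 0"
proof -
  assume pp: "is_policy p"
  have "(\<Sum>a\<in>UNIV. p s a * (Qf p s a - VV p s)) = (\<Sum>a\<in>UNIV. p s a * Qf p s a) - (\<Sum>a\<in>UNIV. p s a) * VV p s"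
    by (simp add: right_diff_distrib sum_subtractf sum_distrib_right)
  then show ?thesis using VQ[OF pp, of s] pp by (simp add: is_policy_def)
qed

end

locale softline = mdpc P r gamma mu
  for P :: "'s::finite \<Rightarrow> 'a::finite \<Rightarrow> 's \<Rightarrow> real" and r gamma mu +
  fixes th0 u :: "real ^ ('s \<times> 'a)" and t0 :: real
begin

abbreviation "pi0 \<equiv> softmax (th0 + t0 *\<^sub>R u)"
definition ubar where "ubar s = (\<Sum>b\<in>UNIV. pi0 s b * u $ (s, b))"
definition dpi where "dpi s a = pi0 s a * (u $ (s, a) - ubar s)"

sublocale pl: polline P r gamma mu "\<lambda>t. softmax (th0 + t *\<^sub>R u)" t0 dpi
  by unfold_locales (auto simp: softmax_policy dpi_def ubar_def intro: softmax_deriv)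

lemma bb_eq2: "pl.bb x = (\<Sum>a\<in>UNIV. u $ (x, a) * pi0 x a * (Qf pi0 x a - VV pi0 x))"
proof -
  have "pl.bb x = (\<Sum>a\<in>UNIV. u $ (x, a) * pi0 x a * Qf pi0 x a) - ubar x * (\<Sum>a\<in>UNIV. pi0 x a * Qf pi0 x a)"
    unfolding pl.bb_def dpi_def
    by (simp add: right_diff_distrib left_diff_distrib sum_subtractf sum_distrib_left mult_ac)
  also have "(\<Sum>a\<in>UNIV. pi0 x a * Qf pi0 x a) = VV pi0 x" by (rule VQ[symmetric, OF softmax_policy])
  also have "(\<Sum>a\<in>UNIV. u $ (x, a) * pi0 x a * Qf pi0 x a) - ubar x * VV pi0 x
      = (\<Sum>a\<in>UNIV. u $ (x, a) * pi0 x a * (Qf pi0 x a - VV pi0 x))"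
    unfolding ubar_def by (simp add: right_diff_distrib sum_subtractf sum_distrib_right sum_distrib_left mult_ac)
  finally show ?thesis .
qed

lemma rho_bb: "rho pi0 x * pl.bb x = (\<Sum>a\<in>UNIV. u $ (x, a) * Gf (th0 + t0 *\<^sub>R u) x a)"
  unfolding bb_eq2 Gf_def by (simp add: sum_distrib_left mult_ac)

lemma J_deriv: "DERIV (\<lambda>t. Vmu P r gamma (softmax (th0 + t *\<^sub>R u)) mu) t0 :>
    (\<Sum>i\<in>UNIV. Gv (th0 + t0 *\<^sub>R u) $ i * u $ i)"
proof -
  have e: "(\<lambda>t. Vmu P r gamma (softmax (th0 + t *\<^sub>R u)) mu) = (\<lambda>t. \<Sum>s\<in>UNIV. mu s * VV (softmax (th0 + t *\<^sub>R u)) s)"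
    by (rule ext) (simp add: Vmu_def Vs_eq softmax_policy)
  have raw: "DERIV (\<lambda>t. \<Sum>s\<in>UNIV. mu s * VV (softmax (th0 + t *\<^sub>R u)) s) t0 :>
      (\<Sum>s\<in>UNIV. mu s * (\<Sum>x\<in>UNIV. MM pi0 s x * pl.bb x))"
    by (rule DERIV_sum, rule DERIV_cmult[OF pl.VV_deriv])
  have "(\<Sum>s\<in>UNIV. mu s * (\<Sum>x\<in>UNIV. MM pi0 s x * pl.bb x)) = (\<Sum>s\<in>UNIV. \<Sum>x\<in>UNIV. mu s * MM pi0 s x * pl.bb x)"
    by (simp add: sum_distrib_left mult.assoc)
  also have "\<dots> = (\<Sum>x\<in>UNIV. \<Sum>s\<in>UNIV. mu s * MM pi0 s x * pl.bb x)" by (rule sum.swap)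
  also have "\<dots> = (\<Sum>x\<in>UNIV. rho pi0 x * pl.bb x)" unfolding rho_def by (simp add: sum_distrib_right)
  also have "\<dots> = (\<Sum>x\<in>UNIV. \<Sum>a\<in>UNIV. u $ (x, a) * Gf (th0 + t0 *\<^sub>R u) x a)" by (simp add: rho_bb)
  also have "\<dots> = (\<Sum>i\<in>UNIV. Gv (th0 + t0 *\<^sub>R u) $ i * u $ i)"
    by (subst sum_pairs) (simp add: Gv_def mult.commute)
  finally show ?thesis using raw unfolding e by simp
qed

definition drho where "drho y = gamma * (\<Sum>x\<in>UNIV. \<Sum>z\<in>UNIV. rho pi0 x * pl.dP x z * MM pi0 z y)"
definition dV where "dV s = (\<Sum>x\<in>UNIV. MM pi0 s x * pl.bb x)"
definition dQ where "dQ x a = gamma * (\<Sum>z\<in>UNIV. P x a z * dV z)"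
definition DG where "DG s a = (drho s * pi0 s a + dpi s a * rho pi0 s) * (Qf pi0 s a - VV pi0 s)
     + (dQ s a - dV s) * (rho pi0 s * pi0 s a)"

lemma G_deriv: "DERIV (\<lambda>t. Gf (th0 + t *\<^sub>R u) s a) t0 :> DG s a"
  unfolding Gf_def[abs_def] DG_def
  by (intro DERIV_mult DERIV_diff pl.rho_deriv[unfolded drho_def[symmetric]] pl.dpolD
        pl.Qf_deriv[unfolded dV_def[symmetric] dQ_def[symmetric]]
        pl.VV_deriv[unfolded dV_def[symmetric]])

end


lemma norm_vec_le:
  fixes x y :: "real ^ 'n::finite"
  assumes "\<And>i. \<bar>x $ i\<bar> \<le> k * \<bar>y $ i\<bar>" and "0 \<le> k"
  shows "norm x \<le> k * norm y"
proof -
  have "norm x = L2_set (\<lambda>i. \<bar>x $ i\<bar>) UNIV" by (simp add: norm_vec_def)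
  also have "\<dots> \<le> L2_set (\<lambda>i. k * \<bar>y $ i\<bar>) UNIV"
    by (rule L2_set_mono) (use assms in auto)
  also have "\<dots> = k * L2_set (\<lambda>i. \<bar>y $ i\<bar>) UNIV" by (rule L2_set_right_distrib[symmetric, OF assms(2)])
  also have "\<dots> = k * norm y" by (simp add: norm_vec_def)
  finally show ?thesis .
qed

lemma sum_abs_mult_norm:
  fixes x y :: "real ^ 'n::finite"
  shows "(\<Sum>i\<in>UNIV. \<bar>x $ i\<bar> * \<bar>y $ i\<bar>) \<le> norm x * norm y"
proof -
  have "(\<Sum>i\<in>UNIV. \<bar>x $ i\<bar> * \<bar>y $ i\<bar>) \<le> L2_set (\<lambda>i. x $ i) UNIV * L2_set (\<lambda>i. y $ i) UNIV"
    by (rule L2_set_mult_ineq)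
  also have "\<dots> = norm x * norm y" by (simp add: norm_vec_def L2_set_def)
  finally show ?thesis .
qed

context softline begin

lemma pi0_pos: "0 < pi0 s a" by (rule softmax_pos)
lemma pi0_sum: "(\<Sum>a\<in>UNIV. pi0 s a) = 1" by (rule softmax_sum)
lemma pi0_pol: "is_policy pi0" by (rule softmax_policy)

lemma ubar_le: "\<bar>ubar s\<bar> \<le> norm u"
proof -
  have "\<bar>ubar s\<bar> \<le> (\<Sum>b\<in>UNIV. \<bar>pi0 s b * u $ (s, b)\<bar>)" unfolding ubar_def by (rule sum_abs)
  also have "\<dots> \<le> (\<Sum>b\<in>UNIV. pi0 s b * norm u)"
    by (rule sum_mono) (simp add: abs_mult less_imp_le[OF pi0_pos] mult_left_mono component_le_norm_cart)
  also have "\<dots> = norm u" by (simp add: sum_distrib_right[symmetric] pi0_sum)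
  finally show ?thesis .
qed

lemma udiff_le: "\<bar>u $ (s, a) - ubar s\<bar> \<le> 2 * norm u"
  using ubar_le[of s] component_le_norm_cart[of u "(s, a)"] by linarith

lemma dpi_le: "\<bar>dpi s a\<bar> \<le> 2 * norm u * pi0 s a"
  unfolding dpi_def using udiff_le[of s a] pi0_pos[of s a]
  by (simp add: abs_mult mult.commute mult_left_mono)

lemma dP_le: "\<bar>pl.dP x z\<bar> \<le> 2 * norm u * Ppi P pi0 x z"
proof -
  have "\<bar>pl.dP x z\<bar> \<le> (\<Sum>a\<in>UNIV. \<bar>dpi x a * P x a z\<bar>)" unfolding pl.dP_def by (rule sum_abs)
  also have "\<dots> \<le> (\<Sum>a\<in>UNIV. 2 * norm u * pi0 x a * P x a z)"
    by (rule sum_mono) (simp add: abs_mult P_nonneg mult_right_mono dpi_le)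
  also have "\<dots> = 2 * norm u * Ppi P pi0 x z" unfolding Ppi_def by (simp add: sum_distrib_left mult.assoc)
  finally show ?thesis .
qed

lemma rho_pi0_eq: "gamma * (\<Sum>x\<in>UNIV. rho pi0 x * Ppi P pi0 x z) = rho pi0 z - mu z"
  using rho_eq[OF pi0_pol, of z] by simp

context
  fixes c :: real
  assumes c0: "0 \<le> c" and rhob: "\<And>y. rho pi0 y \<le> (1 + c) * mu y"
begin

lemma drho_le: "\<bar>drho y\<bar> \<le> 2 * c * norm u * rho pi0 y"
proof -
  let ?M = "MM pi0" and ?r = "rho pi0" and ?P = "Ppi P pi0"
  have "\<bar>drho y\<bar> \<le> gamma * (\<Sum>x\<in>UNIV. \<Sum>z\<in>UNIV. \<bar>?r x * pl.dP x z * ?M z y\<bar>)"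
  proof -
    have "\<bar>drho y\<bar> = gamma * \<bar>\<Sum>x\<in>UNIV. \<Sum>z\<in>UNIV. ?r x * pl.dP x z * ?M z y\<bar>"
      unfolding drho_def using g0 by (simp add: abs_mult)
    also have "\<dots> \<le> gamma * (\<Sum>x\<in>UNIV. \<Sum>z\<in>UNIV. \<bar>?r x * pl.dP x z * ?M z y\<bar>)"
      by (intro mult_left_mono g0 order.trans[OF sum_abs] sum_mono sum_abs)
    finally show ?thesis .
  qed
  also have "\<dots> \<le> gamma * (\<Sum>x\<in>UNIV. \<Sum>z\<in>UNIV. 2 * norm u * (?r x * ?P x z * ?M z y))"
  proof (intro mult_left_mono g0 sum_mono)
    fix x z
    have "\<bar>?r x * pl.dP x z * ?M z y\<bar> = ?r x * \<bar>pl.dP x z\<bar> * ?M z y"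
      using rho_pos[OF pi0_pol, of x] MM_nonneg[OF pi0_pol, of z y] by (simp add: abs_mult)
    also have "\<dots> \<le> ?r x * (2 * norm u * ?P x z) * ?M z y"
      using rho_pos[OF pi0_pol, of x] MM_nonneg[OF pi0_pol, of z y] dP_le[of x z]
      by (intro mult_right_mono mult_left_mono) auto
    finally show "\<bar>?r x * pl.dP x z * ?M z y\<bar> \<le> 2 * norm u * (?r x * ?P x z * ?M z y)" by (simp add: mult_ac)
  qed
  also have "\<dots> = 2 * norm u * (\<Sum>z\<in>UNIV. (gamma * (\<Sum>x\<in>UNIV. ?r x * ?P x z)) * ?M z y)"
  proof -
    have "(\<Sum>x\<in>UNIV. \<Sum>z\<in>UNIV. ?r x * ?P x z * ?M z y) = (\<Sum>z\<in>UNIV. \<Sum>x\<in>UNIV. ?r x * ?P x z * ?M z y)"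
      by (rule sum.swap)
    have "gamma * (\<Sum>x\<in>UNIV. \<Sum>z\<in>UNIV. 2 * norm u * (?r x * ?P x z * ?M z y))
        = 2 * norm u * gamma * (\<Sum>x\<in>UNIV. \<Sum>z\<in>UNIV. ?r x * ?P x z * ?M z y)"
      by (simp add: sum_distrib_left mult_ac)
    also have "\<dots> = 2 * norm u * gamma * (\<Sum>z\<in>UNIV. \<Sum>x\<in>UNIV. ?r x * ?P x z * ?M z y)"
      using \<open>(\<Sum>x\<in>UNIV. \<Sum>z\<in>UNIV. ?r x * ?P x z * ?M z y) = _\<close> by simp
    also have "\<dots> = 2 * norm u * (\<Sum>z\<in>UNIV. (gamma * (\<Sum>x\<in>UNIV. ?r x * ?P x z)) * ?M z y)"
      by (simp add: sum_distrib_left sum_distrib_right mult_ac)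
    finally show ?thesis .
  qed
  also have "\<dots> = 2 * norm u * (\<Sum>z\<in>UNIV. (?r z - mu z) * ?M z y)" by (simp add: rho_pi0_eq)
  also have "\<dots> \<le> 2 * norm u * (\<Sum>z\<in>UNIV. (c * mu z) * ?M z y)"
  proof (intro mult_left_mono sum_mono)
    fix z show "(?r z - mu z) * ?M z y \<le> (c * mu z) * ?M z y"
      using rhob[of z] MM_nonneg[OF pi0_pol, of z y] by (intro mult_right_mono) (auto simp: algebra_simps)
  qed simp
  also have "\<dots> = 2 * c * norm u * ?r y" unfolding rho_def by (simp add: sum_distrib_left mult_ac)
  finally show ?thesis .
qed

abbreviation "th1 \<equiv> th0 + t0 *\<^sub>R u"

lemma rho_bb_le: "(\<Sum>x\<in>UNIV. rho pi0 x * \<bar>pl.bb x\<bar>) \<le> norm u * norm (Gv th1)"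
proof -
  have "(\<Sum>x\<in>UNIV. rho pi0 x * \<bar>pl.bb x\<bar>) = (\<Sum>x\<in>UNIV. \<bar>\<Sum>a\<in>UNIV. u $ (x, a) * Gf th1 x a\<bar>)"
    using rho_pos[OF pi0_pol] by (simp add: rho_bb[symmetric] abs_mult less_imp_le)
  also have "\<dots> \<le> (\<Sum>x\<in>UNIV. \<Sum>a\<in>UNIV. \<bar>u $ (x, a)\<bar> * \<bar>Gv th1 $ (x, a)\<bar>)"
    by (intro sum_mono order.trans[OF sum_abs]) (simp add: Gv_def abs_mult)
  also have "\<dots> = (\<Sum>i\<in>UNIV. \<bar>u $ i\<bar> * \<bar>Gv th1 $ i\<bar>)" by (rule sum_pairs[symmetric])
  also have "\<dots> \<le> norm u * norm (Gv th1)" by (rule sum_abs_mult_norm)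
  finally show ?thesis .
qed

lemma dV_le: "(\<Sum>z\<in>UNIV. mu z * \<bar>dV z\<bar>) \<le> norm u * norm (Gv th1)"
proof -
  have "(\<Sum>z\<in>UNIV. mu z * \<bar>dV z\<bar>) \<le> (\<Sum>z\<in>UNIV. \<Sum>x\<in>UNIV. mu z * MM pi0 z x * \<bar>pl.bb x\<bar>)"
  proof (rule sum_mono)
    fix z
    have "\<bar>dV z\<bar> \<le> (\<Sum>x\<in>UNIV. MM pi0 z x * \<bar>pl.bb x\<bar>)"
      unfolding dV_def by (rule order.trans[OF sum_abs]) (simp add: abs_mult MM_nonneg[OF pi0_pol])
    then have "mu z * \<bar>dV z\<bar> \<le> mu z * (\<Sum>x\<in>UNIV. MM pi0 z x * \<bar>pl.bb x\<bar>)"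
      using mu_pos by (intro mult_left_mono) (auto simp: less_imp_le)
    then show "mu z * \<bar>dV z\<bar> \<le> (\<Sum>x\<in>UNIV. mu z * MM pi0 z x * \<bar>pl.bb x\<bar>)"
      by (simp add: sum_distrib_left mult.assoc)
  qed
  also have "\<dots> = (\<Sum>x\<in>UNIV. \<Sum>z\<in>UNIV. mu z * MM pi0 z x * \<bar>pl.bb x\<bar>)" by (rule sum.swap)
  also have "\<dots> = (\<Sum>x\<in>UNIV. rho pi0 x * \<bar>pl.bb x\<bar>)" unfolding rho_def by (simp add: sum_distrib_right)
  also have "\<dots> \<le> norm u * norm (Gv th1)" by (rule rho_bb_le)
  finally show ?thesis .
qed

lemma T2_le: "(\<Sum>s\<in>UNIV. \<Sum>a\<in>UNIV. \<bar>(dQ s a - dV s) * (rho pi0 s * pi0 s a)\<bar>) \<le> (1 + 2 * c) * norm u * norm (Gv th1)"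
proof -
  let ?r = "rho pi0"
  have rnn: "0 \<le> ?r s" for s using rho_pos[OF pi0_pol] less_imp_le by blast
  have pnn: "0 \<le> pi0 s a" for s a using pi0_pos less_imp_le by blast
  have "(\<Sum>s\<in>UNIV. \<Sum>a\<in>UNIV. \<bar>(dQ s a - dV s) * (?r s * pi0 s a)\<bar>)
      \<le> (\<Sum>s\<in>UNIV. \<Sum>a\<in>UNIV. (gamma * (\<Sum>z\<in>UNIV. P s a z * \<bar>dV z\<bar>) + \<bar>dV s\<bar>) * (?r s * pi0 s a))"
  proof (intro sum_mono)
    fix s a
    have "\<bar>dQ s a\<bar> \<le> gamma * (\<Sum>z\<in>UNIV. P s a z * \<bar>dV z\<bar>)"
      unfolding dQ_def using g0
      by (simp add: abs_mult) (intro mult_left_mono order.trans[OF sum_abs], auto simp: abs_mult P_nonneg)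
    then have "\<bar>dQ s a - dV s\<bar> \<le> gamma * (\<Sum>z\<in>UNIV. P s a z * \<bar>dV z\<bar>) + \<bar>dV s\<bar>" by linarith
    then show "\<bar>(dQ s a - dV s) * (?r s * pi0 s a)\<bar> \<le> (gamma * (\<Sum>z\<in>UNIV. P s a z * \<bar>dV z\<bar>) + \<bar>dV s\<bar>) * (?r s * pi0 s a)"
      using rnn[of s] pnn[of s a] by (simp add: abs_mult mult_right_mono)
  qed
  also have "\<dots> = (\<Sum>s\<in>UNIV. \<Sum>a\<in>UNIV. gamma * (\<Sum>z\<in>UNIV. P s a z * \<bar>dV z\<bar>) * (?r s * pi0 s a))
        + (\<Sum>s\<in>UNIV. \<Sum>a\<in>UNIV. \<bar>dV s\<bar> * (?r s * pi0 s a))"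
    by (simp only: distrib_right sum.distrib)
  also have "(\<Sum>s\<in>UNIV. \<Sum>a\<in>UNIV. gamma * (\<Sum>z\<in>UNIV. P s a z * \<bar>dV z\<bar>) * (?r s * pi0 s a))
      = (\<Sum>s\<in>UNIV. \<Sum>a\<in>UNIV. gamma * (\<Sum>z\<in>UNIV. ?r s * pi0 s a * P s a z * \<bar>dV z\<bar>))"
    by (rule sum.cong[OF refl], rule sum.cong[OF refl]) (simp add: sum_distrib_left sum_distrib_right mult_ac)
  also have "(\<Sum>s\<in>UNIV. \<Sum>a\<in>UNIV. \<bar>dV s\<bar> * (?r s * pi0 s a)) = (\<Sum>s\<in>UNIV. ?r s * \<bar>dV s\<bar>)"
  proof (rule sum.cong[OF refl])
    fix s
    have "(\<Sum>a\<in>UNIV. \<bar>dV s\<bar> * (?r s * pi0 s a)) = (\<bar>dV s\<bar> * ?r s) * (\<Sum>a\<in>UNIV. pi0 s a)"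
      by (subst sum_distrib_left) (simp add: mult_ac)
    then show "(\<Sum>a\<in>UNIV. \<bar>dV s\<bar> * (?r s * pi0 s a)) = ?r s * \<bar>dV s\<bar>" by (simp add: pi0_sum)
  qed
  also have "(\<Sum>s\<in>UNIV. \<Sum>a\<in>UNIV. gamma * (\<Sum>z\<in>UNIV. ?r s * pi0 s a * P s a z * \<bar>dV z\<bar>))
      = (\<Sum>z\<in>UNIV. (gamma * (\<Sum>s\<in>UNIV. ?r s * Ppi P pi0 s z)) * \<bar>dV z\<bar>)"
  proof -
    have "(\<Sum>s\<in>UNIV. \<Sum>a\<in>UNIV. gamma * (\<Sum>z\<in>UNIV. ?r s * pi0 s a * P s a z * \<bar>dV z\<bar>))
        = gamma * (\<Sum>s\<in>UNIV. \<Sum>a\<in>UNIV. \<Sum>z\<in>UNIV. ?r s * pi0 s a * P s a z * \<bar>dV z\<bar>)"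
      by (simp add: sum_distrib_left)
    also have "(\<Sum>s\<in>UNIV. \<Sum>a\<in>UNIV. \<Sum>z\<in>UNIV. ?r s * pi0 s a * P s a z * \<bar>dV z\<bar>)
        = (\<Sum>s\<in>UNIV. \<Sum>z\<in>UNIV. \<Sum>a\<in>UNIV. ?r s * pi0 s a * P s a z * \<bar>dV z\<bar>)"
      by (rule sum.cong[OF refl]) (rule sum.swap)
    also have "\<dots> = (\<Sum>z\<in>UNIV. \<Sum>s\<in>UNIV. \<Sum>a\<in>UNIV. ?r s * pi0 s a * P s a z * \<bar>dV z\<bar>)"
      by (rule sum.swap)
    also have "\<dots> = (\<Sum>z\<in>UNIV. (\<Sum>s\<in>UNIV. ?r s * Ppi P pi0 s z) * \<bar>dV z\<bar>)"
      unfolding Ppi_def by (simp add: sum_distrib_left sum_distrib_right mult_ac)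
    finally show ?thesis by (simp add: sum_distrib_left mult_ac)
  qed
  also have "\<dots> = (\<Sum>z\<in>UNIV. (?r z - mu z) * \<bar>dV z\<bar>)" by (simp add: rho_pi0_eq)
  finally have A: "(\<Sum>s\<in>UNIV. \<Sum>a\<in>UNIV. \<bar>(dQ s a - dV s) * (?r s * pi0 s a)\<bar>)
     \<le> (\<Sum>z\<in>UNIV. (?r z - mu z) * \<bar>dV z\<bar>) + (\<Sum>s\<in>UNIV. ?r s * \<bar>dV s\<bar>)"
    by (simp add: pi0_sum)
  have "(\<Sum>z\<in>UNIV. (?r z - mu z) * \<bar>dV z\<bar>) + (\<Sum>s\<in>UNIV. ?r s * \<bar>dV s\<bar>)
      = (\<Sum>z\<in>UNIV. (2 * ?r z - mu z) * \<bar>dV z\<bar>)"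
    by (simp add: sum.distrib[symmetric] algebra_simps)
  also have "\<dots> \<le> (\<Sum>z\<in>UNIV. (1 + 2 * c) * (mu z * \<bar>dV z\<bar>))"
  proof (rule sum_mono)
    fix z
    have "2 * ?r z - mu z \<le> (1 + 2 * c) * mu z" using rhob[of z] by (simp add: algebra_simps)
    then show "(2 * ?r z - mu z) * \<bar>dV z\<bar> \<le> (1 + 2 * c) * (mu z * \<bar>dV z\<bar>)"
      by (simp add: mult_right_mono mult.assoc[symmetric])
  qed
  also have "\<dots> = (1 + 2 * c) * (\<Sum>z\<in>UNIV. mu z * \<bar>dV z\<bar>)" by (simp add: sum_distrib_left)
  also have "\<dots> \<le> (1 + 2 * c) * (norm u * norm (Gv th1))"
    by (rule mult_left_mono[OF dV_le]) (use c0 in simp)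
  finally show ?thesis using A by simp
qed

definition DGv where "DGv = (\<chi> i. DG (fst i) (snd i))"

lemma DGv_le: "norm DGv \<le> (3 + 4 * c) * norm u * norm (Gv th1)"
proof -
  define X where "X = (\<chi> i. (drho (fst i) * pi0 (fst i) (snd i) + dpi (fst i) (snd i) * rho pi0 (fst i))
      * (Qf pi0 (fst i) (snd i) - VV pi0 (fst i)))"
  define Y where "Y = (\<chi> i. (dQ (fst i) (snd i) - dV (fst i)) * (rho pi0 (fst i) * pi0 (fst i) (snd i)))"
  have DXY: "DGv = X + Y" unfolding DGv_def X_def Y_def DG_def by (simp add: vec_eq_iff)
  have "norm X \<le> (2 * c * norm u + 2 * norm u) * norm (Gv th1)"
  proof (rule norm_vec_le)
    fix i :: "'s \<times> 'a"
    obtain s a where i: "i = (s, a)" by fastforce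
    have rp: "0 < rho pi0 s" by (rule rho_pos[OF pi0_pol])
    have "X $ i = (drho s / rho pi0 s + (u $ (s, a) - ubar s)) * Gv th1 $ i"
      unfolding X_def Gv_def Gf_def dpi_def i using rp by (simp add: field_simps)
    moreover have "\<bar>drho s / rho pi0 s + (u $ (s, a) - ubar s)\<bar> \<le> 2 * c * norm u + 2 * norm u"
    proof -
      have "\<bar>drho s / rho pi0 s\<bar> \<le> 2 * c * norm u"
        using drho_le[of s] rp by (simp add: abs_div pos_divide_le_eq)
      then show ?thesis using udiff_le[of s a] by linarith
    qed
    ultimately show "\<bar>X $ i\<bar> \<le> (2 * c * norm u + 2 * norm u) * \<bar>Gv th1 $ i\<bar>"
      by (simp add: abs_mult mult_right_mono)
  next
    show "0 \<le> 2 * c * norm u + 2 * norm u" using c0 by simp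
  qed
  moreover have "norm Y \<le> (1 + 2 * c) * norm u * norm (Gv th1)"
  proof -
    have "norm Y \<le> (\<Sum>i\<in>UNIV. \<bar>Y $ i\<bar>)" by (rule norm_le_l1_cart)
    also have "\<dots> = (\<Sum>s\<in>UNIV. \<Sum>a\<in>UNIV. \<bar>(dQ s a - dV s) * (rho pi0 s * pi0 s a)\<bar>)"
      by (subst sum_pairs) (simp add: Y_def)
    also have "\<dots> \<le> (1 + 2 * c) * norm u * norm (Gv th1)" by (rule T2_le)
    finally show ?thesis .
  qed
  ultimately have "norm DGv \<le> (2 * c * norm u + 2 * norm u) * norm (Gv th1) + (1 + 2 * c) * norm u * norm (Gv th1)"
    unfolding DXY using norm_triangle_ineq[of X Y] by linarith
  also have "\<dots> = (3 + 4 * c) * norm u * norm (Gv th1)" by (simp add: algebra_simps)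
  finally show ?thesis .
qed

end
end


context mdpc begin

lemma grad_Gv: "grad (\<lambda>th. Vmu P r gamma (softmax th) mu) th = Gv th"
proof -
  have "deriv (\<lambda>t. Vmu P r gamma (softmax (th + t *\<^sub>R axis i 1)) mu) 0 = Gv th $ i" for i
  proof -
    interpret sl: softline P r gamma mu th "axis i 1" 0
      using mdpc_axioms by (simp add: softline_def)
    have "DERIV (\<lambda>t. Vmu P r gamma (softmax (th + t *\<^sub>R axis i 1)) mu) 0 :>
       (\<Sum>j\<in>UNIV. Gv (th + 0 *\<^sub>R axis i 1) $ j * axis i 1 $ j)"
      by (rule sl.J_deriv)
    moreover have "(\<Sum>j\<in>UNIV. Gv (th + 0 *\<^sub>R axis i 1) $ j * axis i 1 $ j) = Gv th $ i"
      by (simp add: axis_def sum_if_eqs)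
    ultimately show ?thesis by (simp add: DERIV_imp_deriv)
  qed
  then show ?thesis unfolding grad_def by (simp add: vec_eq_iff)
qed

lemma dvisit_le1: "is_policy p \<Longrightarrow> dvisit P gamma p mu s \<le> 1"
proof -
  assume pp: "is_policy p"
  have "rho p s \<le> (\<Sum>s0\<in>UNIV. mu s0 * (1 / (1 - gamma)))"
    unfolding rho_def using mu_pos MM_le[OF pp] by (intro sum_mono mult_left_mono) (auto simp: less_imp_le)
  also have "\<dots> = 1 / (1 - gamma)" by (simp add: sum_divide_distrib[symmetric] mu_sum)
  finally show ?thesis using dvisit_eq[OF pp, of s] g1 by (simp add: field_simps)
qed

lemma C_bdd: "bdd_above {dvisit P gamma pol mu s / mu s | (pol :: 's \<Rightarrow> 'a \<Rightarrow> real) s. is_policy pol}"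
proof (rule bdd_aboveI)
  fix x assume "x \<in> {dvisit P gamma pol mu s / mu s | (pol :: 's \<Rightarrow> 'a \<Rightarrow> real) s. is_policy pol}"
  then obtain pol s where x: "x = dvisit P gamma pol mu s / mu s" and pp: "is_policy (pol :: 's \<Rightarrow> 'a \<Rightarrow> real)" by blast
  have "x \<le> 1 / mu s" unfolding x using dvisit_le1[OF pp, of s] mu_pos[rule_format, of s] by (intro divide_right_mono) auto
  also have "\<dots> \<le> (\<Sum>s'\<in>UNIV. 1 / mu s')" by (rule member_le_sum) (use mu_pos in \<open>auto simp: less_imp_le\<close>)
  finally show "x \<le> (\<Sum>s'\<in>UNIV. 1 / mu s')" .
qed

lemma rho_le_C: "is_policy (p :: 's \<Rightarrow> 'a \<Rightarrow> real) \<Longrightarrow> (1 - gamma) * rho p s \<le> C_inf P gamma mu * mu s"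
proof -
  assume pp: "is_policy p"
  have "dvisit P gamma p mu s / mu s \<le> C_inf P gamma mu"
    unfolding C_inf_def by (rule cSup_upper[OF _ C_bdd]) (use pp in blast)
  then show ?thesis using dvisit_eq[OF pp, of s] mu_pos by (simp add: pos_divide_le_eq)
qed

lemma C_ge: "1 - gamma \<le> C_inf P gamma mu"
proof -
  obtain s :: 's where True by blast
  have p: "is_policy (softmax (0 :: real ^ ('s \<times> 'a)))" by (rule softmax_policy)
  have "(1 - gamma) * mu s \<le> (1 - gamma) * rho (softmax (0 :: real ^ ('s \<times> 'a))) s"
    using rho_ge_mu[OF p, of s] g1 by (intro mult_left_mono) auto
  also have "\<dots> \<le> C_inf P gamma mu * mu s" by (rule rho_le_C[OF p])
  finally show ?thesis using mu_pos by (simp add: mult_le_cancel_right)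
qed

lemma growth:
  fixes th v :: "real ^ ('s \<times> 'a)" and c T :: real
  assumes c0: "0 \<le> c" and rb: "\<And>th y. rho (softmax th) y \<le> (1 + c) * mu y"
    and nv: "norm v = 1" and T0: "0 \<le> T"
  shows "(norm (Gv (th + T *\<^sub>R v)))\<^sup>2 \<le> exp (2 * (3 + 4 * c) * T) * (norm (Gv th))\<^sup>2"
proof -
  define K where "K = 3 + 4 * c"
  define phi where "phi = (\<lambda>t. \<Sum>i\<in>UNIV. Gv (th + t *\<^sub>R v) $ i * Gv (th + t *\<^sub>R v) $ i)"
  have phin: "phi t = (norm (Gv (th + t *\<^sub>R v)))\<^sup>2" for t
    by (simp add: phi_def power2_norm_eq_inner inner_vec_def)
  have dphi: "\<exists>D. DERIV phi t :> D \<and> D \<le> 2 * K * phi t" for t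
  proof -
    interpret sl: softline P r gamma mu th v t
      using mdpc_axioms by (simp add: softline_def)
    have rb': "\<And>y. rho sl.pi0 y \<le> (1 + c) * mu y" by (rule rb)
    have dG: "DERIV (\<lambda>\<tau>. Gv (th + \<tau> *\<^sub>R v) $ i) t :> sl.DGv $ i" for i
      unfolding Gv_def sl.DGv_def[OF c0 rb'] by simp (rule sl.G_deriv)
    have D: "DERIV phi t :> (\<Sum>i\<in>UNIV. sl.DGv $ i * Gv (th + t *\<^sub>R v) $ i + sl.DGv $ i * Gv (th + t *\<^sub>R v) $ i)"
      unfolding phi_def by (rule DERIV_sum) (rule DERIV_mult[OF dG dG])
    have "(\<Sum>i\<in>UNIV. sl.DGv $ i * Gv (th + t *\<^sub>R v) $ i + sl.DGv $ i * Gv (th + t *\<^sub>R v) $ i)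
        \<le> 2 * (\<Sum>i\<in>UNIV. \<bar>sl.DGv $ i\<bar> * \<bar>Gv (th + t *\<^sub>R v) $ i\<bar>)"
      by (simp add: sum_distrib_left) (intro sum_mono, simp add: abs_mult[symmetric])
    also have "\<dots> \<le> 2 * (norm sl.DGv * norm (Gv (th + t *\<^sub>R v)))"
      by (intro mult_left_mono sum_abs_mult_norm) simp
    also have "\<dots> \<le> 2 * ((3 + 4 * c) * norm v * norm (Gv (th + t *\<^sub>R v)) * norm (Gv (th + t *\<^sub>R v)))"
      by (intro mult_left_mono mult_right_mono sl.DGv_le[OF c0 rb]) auto
    also have "\<dots> = 2 * K * phi t" by (simp add: phin K_def nv power2_eq_square)
    finally show ?thesis using D by blast
  qed
  define psi where "psi = (\<lambda>t. exp (- (2 * K * t)) * phi t)"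
  have "psi T \<le> psi 0"
  proof (rule DERIV_nonpos_imp_nonincreasing[OF T0])
    fix t
    obtain D where D: "DERIV phi t :> D" and Dle: "D \<le> 2 * K * phi t" using dphi by blast
    have "DERIV psi t :> exp (- (2 * K * t)) * (- (2 * K)) * phi t + D * exp (- (2 * K * t))"
      unfolding psi_def
      by (rule DERIV_cong[OF DERIV_mult[OF DERIV_chain2[OF DERIV_exp] D]]) (auto intro!: derivative_eq_intros)
    moreover have "exp (- (2 * K * t)) * (- (2 * K)) * phi t + D * exp (- (2 * K * t)) \<le> 0"
    proof -
      have "exp (- (2 * K * t)) * (- (2 * K)) * phi t + D * exp (- (2 * K * t)) = exp (- (2 * K * t)) * (D - 2 * K * phi t)"
        by (simp add: algebra_simps)
      also have "\<dots> \<le> 0" using Dle by (intro mult_nonneg_nonpos) auto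
      finally show ?thesis .
    qed
    ultimately show "\<exists>y. DERIV psi t :> y \<and> y \<le> 0" by blast
  qed
  then have "exp (- (2 * K * T)) * phi T \<le> phi 0" by (simp add: psi_def)
  then have "exp (2 * K * T) * (exp (- (2 * K * T)) * phi T) \<le> exp (2 * K * T) * phi 0"
    by (rule mult_left_mono) simp
  then have "phi T \<le> exp (2 * K * T) * phi 0"
    by (simp add: mult.assoc[symmetric] exp_add[symmetric])
  then show ?thesis by (simp add: phin K_def)
qed

end


theorem lemma7:
  fixes P :: "'s::finite \<Rightarrow> 'a::finite \<Rightarrow> 's \<Rightarrow> real"
    and r :: "'s \<Rightarrow> 'a \<Rightarrow> real" and gamma :: real and mu :: "'s \<Rightarrow> real"
    and theta :: "real ^ ('s \<times> 'a)" and zeta :: real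
  assumes mdp: "is_MDP P r gamma"
    and mu_pos: "\<forall>s. mu s > 0" and mu_sum: "(\<Sum>s\<in>UNIV. mu s) = 1"
    and grad_nz: "grad (\<lambda>th. Vmu P r gamma (softmax th) mu) theta \<noteq> 0"
    and zeta: "0 \<le> zeta" "zeta \<le> 1"
  shows
    "let V = (\<lambda>th. Vmu P r gamma (softmax th) mu);
         g = grad V theta;
         C = C_inf P gamma mu;
         eta = (1 - gamma) / (6 * (1 - gamma) + 8 * (C - (1 - gamma))) * (1 / sqrt (real CARD('s)));
         theta' = theta + eta *\<^sub>R (g /\<^sub>R norm g);
         theta_zeta = theta + zeta *\<^sub>R (theta' - theta)
     in norm (grad V theta_zeta) \<le> 2 * norm g"
proof -
  interpret m: mdpc P r gamma mu using mdp mu_pos mu_sum by (simp add: mdpc_def)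
  define V where "V = (\<lambda>th. Vmu P r gamma (softmax th) mu)"
  define g where "g = grad V theta"
  define C where "C = C_inf P gamma mu"
  define eta where "eta = (1 - gamma) / (6 * (1 - gamma) + 8 * (C - (1 - gamma))) * (1 / sqrt (real CARD('s)))"
  define c where "c = C / (1 - gamma) - 1"
  have g0: "0 \<le> gamma" and g1: "gamma < 1" using m.g0 m.g1 by auto
  have Cge: "1 - gamma \<le> C" unfolding C_def by (rule m.C_ge)
  have c0: "0 \<le> c" unfolding c_def using Cge g1 by (simp add: field_simps)
  have rb: "m.rho (softmax th) y \<le> (1 + c) * mu y" for th y
  proof -
    have "(1 - gamma) * m.rho (softmax th) y \<le> C * mu y" unfolding C_def by (rule m.rho_le_C[OF softmax_policy])
    then show ?thesis unfolding c_def using g1 by (simp add: field_simps)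
  qed
  have gG: "g = m.Gv theta" unfolding g_def V_def by (rule m.grad_Gv)
  have npos: "0 < norm g" using grad_nz unfolding g_def V_def by simp
  define v where "v = g /\<^sub>R norm g"
  have nv: "norm v = 1" unfolding v_def using npos by simp
  have S1: "1 \<le> sqrt (real CARD('s))" by simp
  have Dpos: "0 < 6 * (1 - gamma) + 8 * (C - (1 - gamma))"
  proof (rule add_pos_nonneg)
    show "0 < 6 * (1 - gamma)" using g1 by simp
    show "0 \<le> 8 * (C - (1 - gamma))" using Cge by simp
  qed
  have eta0: "0 \<le> eta" unfolding eta_def using Dpos g1 by simp
  define T where "T = zeta * eta"
  have T0: "0 \<le> T" unfolding T_def using zeta eta0 by simp
  have Keta: "(3 + 4 * c) * eta \<le> 1 / 2"
  proof -
    have "(3 + 4 * c) * ((1 - gamma) / (6 * (1 - gamma) + 8 * (C - (1 - gamma)))) = 1 / 2"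
    proof -
      have a0: "0 < 1 - gamma" using g1 by simp
      have b0: "0 < 4 * C - (1 - gamma)" using Dpos by simp
      have e1: "3 + 4 * c = (4 * C - (1 - gamma)) / (1 - gamma)" unfolding c_def using a0 by (simp add: field_simps)
      have e2: "6 * (1 - gamma) + 8 * (C - (1 - gamma)) = 2 * (4 * C - (1 - gamma))" by simp
      show ?thesis unfolding e1 e2 using a0 b0 by simp
    qed
    note hX = this
    have "(3 + 4 * c) * eta = (3 + 4 * c) * ((1 - gamma) / (6 * (1 - gamma) + 8 * (C - (1 - gamma)))) * (1 / sqrt (real CARD('s)))"
      unfolding eta_def by (simp only: mult.assoc)
    then have "(3 + 4 * c) * eta = 1 / 2 * (1 / sqrt (real CARD('s)))"
      by (simp only: hX)
    also have "\<dots> \<le> 1 / 2 * 1" using S1 by (intro mult_left_mono) auto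
    finally show ?thesis by simp
  qed
  have KT: "2 * (3 + 4 * c) * T \<le> 1"
  proof -
    have "2 * (3 + 4 * c) * T = zeta * (2 * ((3 + 4 * c) * eta))" unfolding T_def by (simp add: mult_ac)
    also have "\<dots> \<le> 1 * 1" using zeta Keta eta0 c0 by (intro mult_mono) auto
    finally show ?thesis by simp
  qed
  have thz: "theta + zeta *\<^sub>R ((theta + eta *\<^sub>R (g /\<^sub>R norm g)) - theta) = theta + T *\<^sub>R v"
    unfolding T_def v_def by simp
  have "(norm (m.Gv (theta + T *\<^sub>R v)))\<^sup>2 \<le> exp (2 * (3 + 4 * c) * T) * (norm (m.Gv theta))\<^sup>2"
    by (rule m.growth[OF c0 rb nv T0])
  also have "\<dots> \<le> 4 * (norm (m.Gv theta))\<^sup>2"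
  proof (rule mult_right_mono)
    have "exp (2 * (3 + 4 * c) * T) \<le> exp 1" using KT by simp
    also have "\<dots> \<le> 4" using exp_le by simp
    finally show "exp (2 * (3 + 4 * c) * T) \<le> 4" .
  qed simp
  also have "\<dots> = (2 * norm g)\<^sup>2" by (simp add: gG power2_eq_square)
  finally have "norm (m.Gv (theta + T *\<^sub>R v)) \<le> 2 * norm g"
    by (rule power2_le_imp_le) simp
  then have fin: "norm (grad V (theta + zeta *\<^sub>R ((theta + eta *\<^sub>R (g /\<^sub>R norm g)) - theta))) \<le> 2 * norm g"
    unfolding thz V_def m.grad_Gv .
  show ?thesis using fin unfolding eta_def C_def g_def V_def Let_def .
qed


end
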